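(* Let $k$ be an $\mathbf{F}_p$-algebra, $m\in\mathbf{N}\cup\{\infty\}$, $O_m:=\mathbf{F}_p[[\pi]]/(\pi^{m+1})$ and $A:=k[[\pi]]/(\pi^{m+1})$. Let $\iota:\operatorname{HS}^m(k)\to\operatorname{HS}^m(A)$ be induced by the inclusion $k\subset A$, let $J\subset\operatorname{HS}^m(A)$ be the ideal generated by $d^{[n]}\pi^i-\delta_{ni}$ for all $0\le n\le m$ and $i\ge0$, and let $\rho:\operatorname{HS}^m(k)\to\operatorname{HS}^m(A)/J$ be the composite of $\iota$ with the quotient map. Then $\iota$ is injective, $\rho$ is surjective, and there are mutually inverse ring isomorphisms between $\operatorname{HS}^m(A)\otimes_{\operatorname{HS}^m(O_m)}\mathbf{F}_p$ and $\operatorname{HS}^m(A)/J$ compatible with the natural maps from $\operatorname{HS}^m(A)$ to each.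
   Context: For a ring $R$ and $m\in\mathbf{N}\cup\{\infty\}$, $\operatorname{HS}^m(R):=\mathbf{Z}[d^{[n]}a\mid a\in R,0\le n\le m]/\sim$, where $\sim$ is generated by $d^{[n]}(a+b)=d^{[n]}a+d^{[n]}b$, $d^{[n]}(ab)=\sum_{i+j=n}d^{[i]}a\,d^{[j]}b$, and $d^{[0]}1=1$; it is functorial in $R$ via $d^{[n]}a\mapsto d^{[n]}f(a)$. Here $\pi^{\infty+1}:=0$. The map $O_m\to A$ is the inclusion of coefficients $\mathbf{F}_p\subset k$, giving $\operatorname{HS}^m(O_m)\to\operatorname{HS}^m(A)$, and $\operatorname{HS}^m(O_m)\to\mathbf{F}_p$ is the ring homomorphism $d^{[n]}a\mapsto a_n$, where $a=\sum_ia_i\pi^i$ with $a_i\in\mathbf{F}_p$. $\delta_{ni}$ is the Kronecker delta. *)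

theory Defs
  imports "HOL-Algebra.Ring" "HOL-Computational_Algebra.Formal_Power_Series"
          "HOL-Library.Poly_Mapping" "HOL-Library.Extended_Nat"
begin

type_synonym 'v zpoly = "('v \<Rightarrow>\<^sub>0 nat) \<Rightarrow>\<^sub>0 int"

definition Xv :: "'v \<Rightarrow> 'v zpoly" where
  "Xv v = Poly_Mapping.single (Poly_Mapping.single v 1) 1"

definition peval :: "('v \<Rightarrow> 'r::comm_ring_1) \<Rightarrow> 'v zpoly \<Rightarrow> 'r" where
  "peval \<sigma> P = (\<Sum>mo\<in>Poly_Mapping.keys P. of_int (Poly_Mapping.lookup P mo) *
     (\<Prod>v\<in>Poly_Mapping.keys (mo :: 'v \<Rightarrow>\<^sub>0 nat). \<sigma> v ^ Poly_Mapping.lookup mo v))"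

definition gen_ideal :: "'a::comm_ring_1 set \<Rightarrow> 'a set" where
  "gen_ideal S = {x. \<exists>F c. finite F \<and> F \<subseteq> S \<and> x = (\<Sum>s\<in>F. c s * s)}"

text \<open>HS^m(R) is presented as Z[X(n,a)] / HS_ideal m R, where X(n,a) stands for d^[n] a.
  Variables X(n,a) with n > m or a outside the carrier of R are killed by the ideal
  (this is isomorphic to using only the legitimate variables).\<close>
definition HS_rels :: "enat \<Rightarrow> ('a, 'b) ring_scheme \<Rightarrow> (nat \<times> 'a) zpoly set" where
  "HS_rels m R =
     {Xv (n, a \<oplus>\<^bsub>R\<^esub> b) - Xv (n, a) - Xv (n, b) | n a b.
        enat n \<le> m \<and> a \<in> carrier R \<and> b \<in> carrier R}
   \<union> {Xv (n, a \<otimes>\<^bsub>R\<^esub> b) - (\<Sum>i\<le>n. Xv (i, a) * Xv (n - i, b)) | n a b.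
        enat n \<le> m \<and> a \<in> carrier R \<and> b \<in> carrier R}
   \<union> {Xv (0, \<one>\<^bsub>R\<^esub>) - 1}
   \<union> {Xv (n, a) | n a. \<not> (enat n \<le> m \<and> a \<in> carrier R)}"

definition HS_ideal :: "enat \<Rightarrow> ('a, 'b) ring_scheme \<Rightarrow> (nat \<times> 'a) zpoly set" where
  "HS_ideal m R = gen_ideal (HS_rels m R)"

definition hs_map :: "enat \<Rightarrow> ('a, 'b) ring_scheme \<Rightarrow> ('a \<Rightarrow> 'c) \<Rightarrow> (nat \<times> 'a) zpoly \<Rightarrow> (nat \<times> 'c) zpoly" where
  "hs_map m R f = peval (\<lambda>(n, a). if enat n \<le> m \<and> a \<in> carrier R then Xv (n, f a) else 0)"

definition type_ring :: "'a::comm_ring_1 ring" where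
  "type_ring = \<lparr>carrier = UNIV, monoid.mult = (*), one = 1, zero = 0, add = (+)\<rparr>"

definition trunc_fps :: "enat \<Rightarrow> 'a::zero fps \<Rightarrow> 'a fps" where
  "trunc_fps m f = Abs_fps (\<lambda>i. if enat i \<le> m then fps_nth f i else 0)"

text \<open>A = k[[pi]]/(pi^(m+1)), elements represented by truncated power series.\<close>
definition A_ring :: "enat \<Rightarrow> 'k::comm_ring_1 fps ring" where
  "A_ring m = \<lparr>carrier = {f. \<forall>i. \<not> enat i \<le> m \<longrightarrow> fps_nth f i = 0},
               monoid.mult = (\<lambda>f g. trunc_fps m (f * g)), one = 1, zero = 0, add = (+)\<rparr>"

text \<open>O_m = F_p[[pi]]/(pi^(m+1)); F_p is modelled by the integers 0..p-1 with arithmetic mod p,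
  so an element of O_m is an integer power series with coefficients in 0..p-1 vanishing beyond m.\<close>
definition O_ring :: "nat \<Rightarrow> enat \<Rightarrow> int fps ring" where
  "O_ring p m = \<lparr>carrier = {f. \<forall>i. fps_nth f i \<in> {0..<int p} \<and> (\<not> enat i \<le> m \<longrightarrow> fps_nth f i = 0)},
               monoid.mult = (\<lambda>f g. Abs_fps (\<lambda>i. if enat i \<le> m then fps_nth (f * g) i mod int p else 0)),
               one = 1, zero = 0,
               add = (\<lambda>f g. Abs_fps (\<lambda>i. (fps_nth f i + fps_nth g i) mod int p))\<rparr>"

definition O_to_A :: "int fps \<Rightarrow> 'k::comm_ring_1 fps" where
  "O_to_A f = Abs_fps (\<lambda>i. of_int (fps_nth f i))"

text \<open>The ring homomorphism HS^m(O_m) -> F_p, d^[n] a |-> a_n, on representatives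
  (value in 0..p-1 representing an element of F_p).\<close>
definition HS_O_eps :: "nat \<Rightarrow> enat \<Rightarrow> (nat \<times> int fps) zpoly \<Rightarrow> int" where
  "HS_O_eps p m P =
     peval (\<lambda>(n, a). if enat n \<le> m \<and> a \<in> carrier (O_ring p m) then fps_nth a n else 0) P mod int p"

definition J_gens :: "enat \<Rightarrow> (nat \<times> 'k::comm_ring_1 fps) zpoly set" where
  "J_gens m = {Xv (n, trunc_fps m (fps_X ^ i)) - (if n = i then 1 else 0) | n i. enat n \<le> m}"

text \<open>Preimage in Z[X] of J + (relations of HS^m(A)), i.e. the kernel of Z[X] -> HS^m(A)/J.\<close>
definition J_ideal :: "enat \<Rightarrow> (nat \<times> 'k::comm_ring_1 fps) zpoly set" where
  "J_ideal m = gen_ideal (HS_rels m (A_ring m) \<union> J_gens m)"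

end

theory Submission
  imports Defs
begin


definition mon :: "('v \<Rightarrow> 'r::comm_ring_1) \<Rightarrow> ('v \<Rightarrow>\<^sub>0 nat) \<Rightarrow> 'r" where
  "mon \<sigma> mo = (\<Prod>v\<in>Poly_Mapping.keys mo. \<sigma> v ^ Poly_Mapping.lookup mo v)"

lemma peval_mon: "peval \<sigma> P = (\<Sum>mo\<in>Poly_Mapping.keys P. of_int (Poly_Mapping.lookup P mo) * mon \<sigma> mo)"
  by (simp add: peval_def mon_def)

lemma peval_superset:
  assumes "finite S" "Poly_Mapping.keys P \<subseteq> S"
  shows "peval \<sigma> P = (\<Sum>mo\<in>S. of_int (Poly_Mapping.lookup P mo) * mon \<sigma> mo)"
  unfolding peval_mon
  by (rule sum.mono_neutral_left) (use assms in \<open>auto simp: in_keys_iff\<close>)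

lemma mon_superset:
  assumes "finite S" "Poly_Mapping.keys mo \<subseteq> S"
  shows "mon \<sigma> mo = (\<Prod>v\<in>S. \<sigma> v ^ Poly_Mapping.lookup mo v)"
  unfolding mon_def
  by (rule prod.mono_neutral_left) (use assms in \<open>auto simp: in_keys_iff\<close>)

lemma mon_add: "mon \<sigma> (a + b) = mon \<sigma> a * mon \<sigma> b"
proof -
  let ?S = "Poly_Mapping.keys a \<union> Poly_Mapping.keys b"
  have "mon \<sigma> (a + b) = (\<Prod>v\<in>?S. \<sigma> v ^ Poly_Mapping.lookup (a+b) v)"
    by (rule mon_superset) (use keys_add[of a b] in auto)
  also have "\<dots> = (\<Prod>v\<in>?S. \<sigma> v ^ Poly_Mapping.lookup a v) * (\<Prod>v\<in>?S. \<sigma> v ^ Poly_Mapping.lookup b v)"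
    by (simp add: lookup_add power_add prod.distrib)
  also have "\<dots> = mon \<sigma> a * mon \<sigma> b"
    by (subst (1 2) mon_superset[symmetric]) auto
  finally show ?thesis .
qed

lemma mon_zero [simp]: "mon \<sigma> 0 = 1" by (simp add: mon_def)

lemma mon_single1 [simp]: "mon \<sigma> (Poly_Mapping.single v 1) = \<sigma> v" unfolding mon_def by simp

lemma peval_add: "peval \<sigma> (P + Q) = peval \<sigma> P + peval \<sigma> Q"
proof -
  let ?S = "Poly_Mapping.keys P \<union> Poly_Mapping.keys Q"
  have "peval \<sigma> (P + Q) = (\<Sum>mo\<in>?S. of_int (Poly_Mapping.lookup (P+Q) mo) * mon \<sigma> mo)"
    by (rule peval_superset) (use keys_add[of P Q] in auto)
  also have "\<dots> = (\<Sum>mo\<in>?S. of_int (Poly_Mapping.lookup P mo) * mon \<sigma> mo) + (\<Sum>mo\<in>?S. of_int (Poly_Mapping.lookup Q mo) * mon \<sigma> mo)"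
    by (simp add: lookup_add distrib_right sum.distrib)
  also have "\<dots> = peval \<sigma> P + peval \<sigma> Q"
    by (subst (1 2) peval_superset[symmetric]) auto
  finally show ?thesis .
qed

lemma peval_zero [simp]: "peval \<sigma> 0 = 0" by (simp add: peval_def)

lemma peval_uminus: "peval \<sigma> (- P) = - peval \<sigma> P"
  using peval_add[of \<sigma> P "-P"] by (simp add: eq_neg_iff_add_eq_0 add.commute)

lemma peval_diff: "peval \<sigma> (P - Q) = peval \<sigma> P - peval \<sigma> Q"
  using peval_add[of \<sigma> P "-Q"] by (simp add: peval_uminus)

lemma peval_sum: "peval \<sigma> (\<Sum>i\<in>F. f i) = (\<Sum>i\<in>F. peval \<sigma> (f i))"
  by (induction F rule: infinite_finite_induct) (auto simp: peval_add)

lemma peval_single: "peval \<sigma> (Poly_Mapping.single mo c) = of_int c * mon \<sigma> mo"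
  by (simp add: peval_mon)

lemma peval_one [simp]: "peval \<sigma> 1 = 1"
  using peval_single[of \<sigma> 0 1] by simp

lemma peval_Xv [simp]: "peval \<sigma> (Xv v) = \<sigma> v"
  unfolding Xv_def peval_single mon_def by simp

lemma peval_of_int [simp]: "peval \<sigma> (of_int c) = of_int c"
proof -
  have "(of_int c :: 'v zpoly) = Poly_Mapping.single 0 c" using single_of_int[of c, where 'a="'v \<Rightarrow>\<^sub>0 nat"] by (metis of_int_eq_id id_apply)
  then show ?thesis by (metis peval_single mon_zero mult.right_neutral)
qed

lemma peval_mult: "peval \<sigma> (P * Q) = peval \<sigma> P * peval \<sigma> Q"
proof -
  have h: "peval \<sigma> (frag_of x * Q) = peval \<sigma> (frag_of x) * peval \<sigma> Q" for x
    using subset_UNIV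
  proof (induction Q rule: frag_induction)
    case (one y) then show ?case by (simp add: mult_single peval_single mon_add)
  next
    case (diff a b) then show ?case by (simp add: right_diff_distrib peval_diff)
  qed auto
  show ?thesis
    using subset_UNIV
  proof (induction P rule: frag_induction)
    case (diff a b) then show ?case by (simp add: left_diff_distrib peval_diff)
  qed (auto simp: h)
qed

lemma peval_power: "peval \<sigma> (P ^ k) = peval \<sigma> P ^ k"
  by (induction k) (auto simp: peval_mult)

lemma peval_prod: "peval \<sigma> (\<Prod>i\<in>F. f i) = (\<Prod>i\<in>F. peval \<sigma> (f i))"
  by (induction F rule: infinite_finite_induct) (auto simp: peval_mult)

lemma Xv_power: "Xv v ^ k = Poly_Mapping.single (Poly_Mapping.single v k) 1"
  by (induction k) (auto simp: Xv_def mult_single single_add[symmetric])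

lemma prod_single1: "(\<Prod>i\<in>F. Poly_Mapping.single (g i) (1::int)) = Poly_Mapping.single (\<Sum>i\<in>F. g i) 1"
  by (induction F rule: infinite_finite_induct) (auto simp: mult_single)

lemma mo_expand: "(\<Sum>v\<in>Poly_Mapping.keys mo. Poly_Mapping.single v (Poly_Mapping.lookup mo v)) = (mo :: 'v \<Rightarrow>\<^sub>0 nat)"
proof (rule poly_mapping_eqI)
  fix w
  show "Poly_Mapping.lookup (\<Sum>v\<in>Poly_Mapping.keys mo. Poly_Mapping.single v (Poly_Mapping.lookup mo v)) w = Poly_Mapping.lookup mo w"
    by (auto simp: lookup_sum lookup_single when_def in_keys_iff)
qed

lemma frag_of_mon: "frag_of mo = mon Xv mo"
  by (simp add: mon_def Xv_power prod_single1 mo_expand)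

lemma zpoly_induct [case_names one var diff mult]:
  assumes one: "Pr 1" and var: "\<And>v. Pr (Xv v)"
    and diff: "\<And>a b. Pr a \<Longrightarrow> Pr b \<Longrightarrow> Pr (a - b)"
    and mult: "\<And>a b. Pr a \<Longrightarrow> Pr b \<Longrightarrow> Pr (a * b)"
  shows "Pr (P :: 'v zpoly)"
proof -
  have z: "Pr 0" using diff[OF one one] by simp
  have pw: "Pr (a ^ k)" if "Pr a" for a k
    using that by (induction k) (auto intro: one mult)
  have pr: "Pr (\<Prod>i\<in>F. f i)" if "\<And>i. Pr (f i)" for F and f :: "'v \<Rightarrow> 'v zpoly"
    using that by (induction F rule: infinite_finite_induct) (auto intro: one mult)
  show ?thesis
    using subset_UNIV
  proof (induction P rule: frag_induction)
    case (one x)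
    show ?case unfolding frag_of_mon mon_def by (rule pr) (rule pw[OF var])
  qed (auto intro: z diff)
qed

lemma peval_Xv_id [simp]: "peval Xv P = P"
  by (induction P rule: zpoly_induct) (auto simp: peval_diff peval_mult)

lemma peval_compose: "peval \<sigma>2 (peval \<sigma>1 P) = peval (\<lambda>v. peval \<sigma>2 (\<sigma>1 v)) P"
  by (induction P rule: zpoly_induct) (auto simp: peval_diff peval_mult)

lemma peval_of_int_comp: "peval (\<lambda>v. of_int (\<sigma> v)) P = of_int (peval \<sigma> P)"
  by (induction P rule: zpoly_induct) (auto simp: peval_diff peval_mult)

section \<open>ideals\<close>

lemma gen_ideal_0 [simp]: "0 \<in> gen_ideal S"
  unfolding gen_ideal_def by (rule CollectI, rule exI[of _ "{}"]) auto

lemma gen_ideal_gen: "s \<in> S \<Longrightarrow> s \<in> gen_ideal S"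
  unfolding gen_ideal_def by (rule CollectI, rule exI[of _ "{s}"], rule exI[of _ "\<lambda>_. 1"]) auto

lemma gen_ideal_mult: "x \<in> gen_ideal S \<Longrightarrow> r * x \<in> gen_ideal S"
  unfolding gen_ideal_def
proof safe
  fix F c assume "finite F" "F \<subseteq> S"
  then show "\<exists>F' c'. finite F' \<and> F' \<subseteq> S \<and> r * (\<Sum>s\<in>F. c s * s) = (\<Sum>s\<in>F'. c' s * s)"
    by (intro exI[of _ F] exI[of _ "\<lambda>s. r * c s"]) (auto simp: sum_distrib_left mult.assoc)
qed

lemma gen_ideal_add: fixes x :: "'a::comm_ring_1" shows "x \<in> gen_ideal S \<Longrightarrow> y \<in> gen_ideal S \<Longrightarrow> x + y \<in> gen_ideal S"
  unfolding gen_ideal_def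
proof safe
  fix F G and c d :: "'a \<Rightarrow> 'a" assume F: "finite F" "F \<subseteq> S" and G: "finite G" "G \<subseteq> S"
  define c' where "c' s = (if s \<in> F then c s else 0)" for s
  define d' where "d' s = (if s \<in> G then d s else 0)" for s
  have 1: "(\<Sum>s\<in>F. c s * s) = (\<Sum>s\<in>F \<union> G. c' s * s)"
    by (rule sum.mono_neutral_cong_left) (use F G in \<open>auto simp: c'_def\<close>)
  have 2: "(\<Sum>s\<in>G. d s * s) = (\<Sum>s\<in>F \<union> G. d' s * s)"
    by (rule sum.mono_neutral_cong_left) (use F G in \<open>auto simp: d'_def\<close>)
  show "\<exists>F' c'. finite F' \<and> F' \<subseteq> S \<and> (\<Sum>s\<in>F. c s * s) + (\<Sum>s\<in>G. d s * s) = (\<Sum>s\<in>F'. c' s * s)"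
    by (intro exI[of _ "F \<union> G"] exI[of _ "\<lambda>s. c' s + d' s"]) (use F G in \<open>auto simp: 1 2 sum.distrib distrib_right\<close>)
qed

lemma gen_ideal_uminus: "x \<in> gen_ideal S \<Longrightarrow> - x \<in> gen_ideal S"
  using gen_ideal_mult[of x S "-1"] by simp

lemma gen_ideal_diff: "x \<in> gen_ideal S \<Longrightarrow> y \<in> gen_ideal S \<Longrightarrow> x - y \<in> gen_ideal S"
  using gen_ideal_add[OF _ gen_ideal_uminus] by (metis diff_conv_add_uminus)

lemma gen_ideal_mult2: "x \<in> gen_ideal S \<Longrightarrow> x * r \<in> gen_ideal S"
  using gen_ideal_mult by (metis mult.commute)

lemma gen_ideal_sum: "(\<And>i. i \<in> F \<Longrightarrow> f i \<in> gen_ideal S) \<Longrightarrow> (\<Sum>i\<in>F. f i) \<in> gen_ideal S"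
  by (induction F rule: infinite_finite_induct) (auto intro: gen_ideal_add)

lemma gen_ideal_mono: "S \<subseteq> T \<Longrightarrow> x \<in> gen_ideal S \<Longrightarrow> x \<in> gen_ideal T"
  unfolding gen_ideal_def by blast

lemma gen_ideal_elim:
  assumes "x \<in> gen_ideal S" "\<And>s. s \<in> S \<Longrightarrow> f s \<in> gen_ideal T"
    and "\<And>a b. f (a + b) = f a + f b" "\<And>a b. f (a * b) = f a * f b" "f 0 = 0"
  shows "f x \<in> gen_ideal T"
proof -
  obtain F c where F: "finite F" "F \<subseteq> S" "x = (\<Sum>s\<in>F. c s * s)"
    using assms(1) unfolding gen_ideal_def by blast
  have "f (\<Sum>s\<in>F. c s * s) = (\<Sum>s\<in>F. f (c s) * f s)"
    using F(1) by (induction F rule: finite_induct) (auto simp: assms(3,4,5))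
  also have "\<dots> \<in> gen_ideal T"
    by (rule gen_ideal_sum, rule gen_ideal_mult) (use F assms(2) in auto)
  finally show ?thesis using F by simp
qed

lemma gen_ideal_peval_zero:
  assumes "x \<in> gen_ideal S" "\<And>s. s \<in> S \<Longrightarrow> peval \<tau> s = 0"
  shows "peval \<tau> x = 0"
proof -
  obtain F c where F: "finite F" "F \<subseteq> S" "x = (\<Sum>s\<in>F. c s * s)"
    using assms(1) unfolding gen_ideal_def by blast
  then show ?thesis using assms(2) by (auto simp: peval_sum peval_mult intro!: sum.neutral)
qed

lemma peval_cong_ideal:
  assumes "\<And>v. \<sigma> v - \<sigma>' v \<in> gen_ideal S"
  shows "peval \<sigma> P - peval \<sigma>' P \<in> gen_ideal S"
proof (induction P rule: zpoly_induct)
  case (diff a b)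
  have "peval \<sigma> (a - b) - peval \<sigma>' (a - b) = (peval \<sigma> a - peval \<sigma>' a) - (peval \<sigma> b - peval \<sigma>' b)"
    by (simp add: peval_diff)
  then show ?case using diff by (simp add: gen_ideal_diff)
next
  case (mult a b)
  have "peval \<sigma> (a * b) - peval \<sigma>' (a * b) = peval \<sigma> a * (peval \<sigma> b - peval \<sigma>' b) + (peval \<sigma> a - peval \<sigma>' a) * peval \<sigma>' b"
    by (simp add: peval_mult algebra_simps)
  then show ?case using mult by (simp add: gen_ideal_add gen_ideal_mult gen_ideal_mult2)
qed (auto simp: assms)



definition cg :: "'a::comm_ring_1 set \<Rightarrow> 'a \<Rightarrow> 'a \<Rightarrow> bool" where
  "cg S x y \<longleftrightarrow> x - y \<in> gen_ideal S"

lemma cg_refl [simp]: "cg S x x" by (simp add: cg_def)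
lemma cg_sym: "cg S x y \<Longrightarrow> cg S y x"
  unfolding cg_def using gen_ideal_uminus by fastforce
lemma cg_trans [trans]: "cg S x y \<Longrightarrow> cg S y z \<Longrightarrow> cg S x z"
  unfolding cg_def using gen_ideal_add by fastforce
lemma cg_add: "cg S x y \<Longrightarrow> cg S x' y' \<Longrightarrow> cg S (x + x') (y + y')"
  unfolding cg_def using gen_ideal_add by (fastforce simp: algebra_simps)
lemma cg_diff: "cg S x y \<Longrightarrow> cg S x' y' \<Longrightarrow> cg S (x - x') (y - y')"
  unfolding cg_def using gen_ideal_diff by (fastforce simp: algebra_simps)
lemma cg_mult: "cg S x y \<Longrightarrow> cg S x' y' \<Longrightarrow> cg S (x * x') (y * y')"
proof -
  assume a: "cg S x y" "cg S x' y'"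
  have "x * x' - y * y' = x * (x' - y') + (x - y) * y'" by (simp add: algebra_simps)
  then show ?thesis using a unfolding cg_def by (simp add: gen_ideal_add gen_ideal_mult gen_ideal_mult2)
qed
lemma cg_sum: "(\<And>i. i \<in> F \<Longrightarrow> cg S (f i) (g i)) \<Longrightarrow> cg S (\<Sum>i\<in>F. f i) (\<Sum>i\<in>F. g i)"
  by (induction F rule: infinite_finite_induct) (auto intro: cg_add)
lemma cg_zero: "cg S x 0 \<longleftrightarrow> x \<in> gen_ideal S" by (simp add: cg_def)

section \<open>A ring\<close>

lemma A_carrier: "carrier (A_ring m) = {f. \<forall>i. \<not> enat i \<le> m \<longrightarrow> fps_nth f i = 0}"
  by (simp add: A_ring_def)
lemma A_add [simp]: "a \<oplus>\<^bsub>A_ring m\<^esub> b = a + b" by (simp add: A_ring_def)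
lemma A_mult [simp]: "a \<otimes>\<^bsub>A_ring m\<^esub> b = trunc_fps m (a * b)" by (simp add: A_ring_def)
lemma A_one [simp]: "\<one>\<^bsub>A_ring m\<^esub> = 1" by (simp add: A_ring_def)

lemma trunc_nth [simp]: "fps_nth (trunc_fps m f) i = (if enat i \<le> m then fps_nth f i else 0)"
  by (simp add: trunc_fps_def)
lemma trunc_in [simp]: "trunc_fps m f \<in> carrier (A_ring m)"
  by (simp add: A_carrier)
lemma trunc_id: "f \<in> carrier (A_ring m) \<Longrightarrow> trunc_fps m f = f"
  by (rule fps_ext) (auto simp: A_carrier)
lemma C_add [simp]: "a \<in> carrier (A_ring m) \<Longrightarrow> b \<in> carrier (A_ring m) \<Longrightarrow> a + b \<in> carrier (A_ring m)"
  by (simp add: A_carrier)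
lemma C_diff [simp]: "a \<in> carrier (A_ring m) \<Longrightarrow> b \<in> carrier (A_ring m) \<Longrightarrow> a - b \<in> carrier (A_ring m)"
  by (simp add: A_carrier)
lemma C_zero [simp]: "0 \<in> carrier (A_ring m)" by (simp add: A_carrier)
lemma C_const [simp]: "fps_const c \<in> carrier (A_ring m)"
  by (auto simp: A_carrier zero_enat_def[symmetric])
lemma C_one [simp]: "1 \<in> carrier (A_ring m)"
  using C_const[of 1 m] by simp
lemma C_of_nat [simp]: "of_nat k \<in> carrier (A_ring m)"
  using C_const[of "of_nat k" m] by (simp add: fps_of_nat)
lemma C_sum: "(\<And>i. i \<in> F \<Longrightarrow> f i \<in> carrier (A_ring m)) \<Longrightarrow> (\<Sum>i\<in>F. f i) \<in> carrier (A_ring m)"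
  by (induction F rule: infinite_finite_induct) auto
lemma C_Xpow: "enat i \<le> m \<Longrightarrow> fps_X ^ i \<in> carrier (A_ring m)"
  by (auto simp: A_carrier)

lemma enat_le_trans: "i \<le> n \<Longrightarrow> enat n \<le> m \<Longrightarrow> enat i \<le> m"
  by (meson enat_ord_simps(1) order_trans)

section \<open>Relations in J_ideal\<close>

abbreviation JS :: "enat \<Rightarrow> (nat \<times> 'k::comm_ring_1 fps) zpoly set" where
  "JS m \<equiv> HS_rels m (A_ring m) \<union> J_gens m"

lemma J_ideal_eq: "J_ideal m = gen_ideal (JS m)" by (simp add: J_ideal_def)

lemma R1: "enat n \<le> m \<Longrightarrow> a \<in> carrier (A_ring m) \<Longrightarrow> b \<in> carrier (A_ring m) \<Longrightarrow>
  cg (JS m) (Xv (n, a + b)) (Xv (n, a) + Xv (n, b))"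
proof -
  assume h: "enat n \<le> m" "a \<in> carrier (A_ring m)" "b \<in> carrier (A_ring m)"
  have "Xv (n, a \<oplus>\<^bsub>A_ring m\<^esub> b) - Xv (n, a) - Xv (n, b) \<in> HS_rels m (A_ring m)"
    unfolding HS_rels_def using h by blast
  then show ?thesis unfolding cg_def by (auto intro: gen_ideal_gen simp: diff_diff_eq)
qed

lemma R2: "enat n \<le> m \<Longrightarrow> a \<in> carrier (A_ring m) \<Longrightarrow> b \<in> carrier (A_ring m) \<Longrightarrow>
  cg (JS m) (Xv (n, trunc_fps m (a * b))) (\<Sum>i\<le>n. Xv (i, a) * Xv (n - i, b))"
proof -
  assume h: "enat n \<le> m" "a \<in> carrier (A_ring m)" "b \<in> carrier (A_ring m)"
  have "Xv (n, a \<otimes>\<^bsub>A_ring m\<^esub> b) - (\<Sum>i\<le>n. Xv (i, a) * Xv (n - i, b)) \<in> HS_rels m (A_ring m)"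
    unfolding HS_rels_def using h by blast
  then show ?thesis unfolding cg_def by (auto intro: gen_ideal_gen)
qed

lemma R4: "\<not> (enat n \<le> m \<and> a \<in> carrier (A_ring m)) \<Longrightarrow> cg (JS m) (Xv (n, a)) 0"
proof -
  assume h: "\<not> (enat n \<le> m \<and> a \<in> carrier (A_ring m))"
  have "Xv (n, a) \<in> HS_rels m (A_ring m)"
    unfolding HS_rels_def using h by blast
  then show ?thesis unfolding cg_def by (auto intro: gen_ideal_gen)
qed

lemma RJ: "enat n \<le> m \<Longrightarrow> cg (JS m) (Xv (n, trunc_fps m (fps_X ^ i :: 'k::comm_ring_1 fps))) (if n = i then 1 else 0)"
proof -
  assume h: "enat n \<le> m"
  have "Xv (n, trunc_fps m (fps_X ^ i)) - (if n = i then 1 else 0) \<in> (J_gens m :: (nat \<times> 'k fps) zpoly set)"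
    unfolding J_gens_def using h by blast
  then show ?thesis unfolding cg_def by (auto intro: gen_ideal_gen)
qed

lemma RJ': "enat n \<le> m \<Longrightarrow> enat i \<le> m \<Longrightarrow> cg (JS m) (Xv (n, fps_X ^ i)) (if n = i then 1 else 0)"
  using RJ[of n m i] by (simp add: trunc_id C_Xpow)

lemma D0: "cg (JS m) (Xv (n, 0)) 0"
proof (cases "enat n \<le> m")
  case True
  have "cg (JS m) (Xv (n, 0 + 0)) (Xv (n, 0) + Xv (n, 0))" by (rule R1) (use True in auto)
  then have "Xv (n, 0) - (Xv (n, 0) + Xv (n, 0)) \<in> gen_ideal (JS m)"
    unfolding cg_def by simp
  then have "- (Xv (n, 0) - (Xv (n, 0) + Xv (n, 0))) \<in> gen_ideal (JS m)"
    by (rule gen_ideal_uminus)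
  then show ?thesis by (simp add: cg_def)
next
  case False then show ?thesis by (intro R4) auto
qed

lemma Dsum: "enat n \<le> m \<Longrightarrow> (\<And>i. i \<in> F \<Longrightarrow> f i \<in> carrier (A_ring m)) \<Longrightarrow>
   cg (JS m) (Xv (n, \<Sum>i\<in>F. f i)) (\<Sum>i\<in>F. Xv (n, f i))"
proof (induction F rule: infinite_finite_induct)
  case (insert x F)
  have "cg (JS m) (Xv (n, f x + (\<Sum>i\<in>F. f i))) (Xv (n, f x) + Xv (n, \<Sum>i\<in>F. f i))"
    by (rule R1) (use insert in \<open>auto intro: C_sum\<close>)
  also have "cg (JS m) \<dots> (Xv (n, f x) + (\<Sum>i\<in>F. Xv (n, f i)))"
    by (rule cg_add) (use insert in auto)
  finally show ?case using insert by simp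
qed (auto simp: D0)



lemma Tail:
  assumes n: "enat n \<le> m" and t: "t \<in> carrier (A_ring m)" and z: "\<And>i. i \<le> n \<Longrightarrow> fps_nth t i = 0"
  shows "cg (JS m) (Xv (n, t)) 0"
proof (cases "t = 0")
  case True then show ?thesis by (simp add: D0)
next
  case False
  then obtain j where j: "fps_nth t j \<noteq> 0" by (metis fps_ext fps_zero_nth)
  with z have "n < j" by (meson not_le)
  moreover have "enat j \<le> m" using j t by (auto simp: A_carrier)
  ultimately have m1: "enat (Suc n) \<le> m" by (meson Suc_leI enat_le_trans)
  define s where "s = fps_shift (Suc n) t"
  have sC: "s \<in> carrier (A_ring m)"
  proof -
    have "fps_nth s i = 0" if "\<not> enat i \<le> m" for i
    proof -
      have "\<not> enat (i + Suc n) \<le> m" using that enat_le_trans[of i "i + Suc n" m] by auto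
      then show ?thesis using t by (auto simp: s_def A_carrier)
    qed
    then show ?thesis by (auto simp: A_carrier)
  qed
  have XC: "fps_X ^ Suc n \<in> carrier (A_ring m)" by (rule C_Xpow[OF m1])
  have teq: "t = fps_X ^ Suc n * s"
  proof (rule fps_ext)
    fix i show "fps_nth t i = fps_nth (fps_X ^ Suc n * s) i"
      using z[of i] fps_X_power_mult_nth[of "Suc n" s i] by (auto simp: s_def simp del: power_Suc)
  qed
  have "t = trunc_fps m (fps_X ^ Suc n * s)" using teq t by (simp add: trunc_id)
  then have "cg (JS m) (Xv (n, t)) (\<Sum>i\<le>n. Xv (i, fps_X ^ Suc n) * Xv (n - i, s))"
    using R2[OF n XC sC] by simp
  also have "cg (JS m) \<dots> (\<Sum>i\<le>n. 0 * Xv (n - i, s))"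
  proof (rule cg_sum, rule cg_mult)
    fix i assume "i \<in> {..n}"
    then have "enat i \<le> m" using n enat_le_trans by auto
    then show "cg (JS m) (Xv (i, fps_X ^ Suc n)) 0"
      using RJ'[of i m "Suc n"] m1 \<open>i \<in> {..n}\<close> by auto
  qed simp
  finally show ?thesis by simp
qed

lemma Mono:
  assumes n: "enat n \<le> m" and i: "i \<le> n"
  shows "cg (JS m) (Xv (n, trunc_fps m (fps_const c * fps_X ^ i))) (Xv (n - i, fps_const c))"
proof -
  have im: "enat i \<le> m" using i n enat_le_trans by auto
  have "cg (JS m) (Xv (n, trunc_fps m (fps_const c * fps_X ^ i))) (\<Sum>j\<le>n. Xv (j, fps_const c) * Xv (n - j, fps_X ^ i))"
    by (rule R2[OF n C_const C_Xpow[OF im]])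
  also have "cg (JS m) \<dots> (\<Sum>j\<le>n. Xv (j, fps_const c) * (if n - j = i then 1 else 0))"
  proof (rule cg_sum, rule cg_mult)
    fix j assume "j \<in> {..n}"
    then have "enat (n - j) \<le> m" using n enat_le_trans[of "n - j" n m] by auto
    then show "cg (JS m) (Xv (n - j, fps_X ^ i)) (if n - j = i then 1 else 0)"
      using RJ'[OF _ im] by blast
  qed simp
  also have "(\<Sum>j\<le>n. Xv (j, fps_const c) * (if n - j = i then 1 else 0)) =
             (\<Sum>j\<le>n. if j = n - i then Xv (j, fps_const c) else 0)"
    by (rule sum.cong) (use i in auto)
  also have "\<dots> = Xv (n - i, fps_const c)" using i by simp
  finally show ?thesis .
qed

lemma KEY:
  assumes n: "enat n \<le> m" and a: "a \<in> carrier (A_ring m)"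
  shows "cg (JS m) (Xv (n, a)) (\<Sum>i\<le>n. Xv (n - i, fps_const (fps_nth a i)))"
proof -
  define u where "u i = trunc_fps m (fps_const (fps_nth a i) * fps_X ^ i)" for i
  define t where "t = a - (\<Sum>i\<le>n. u i)"
  have uC: "u i \<in> carrier (A_ring m)" for i by (simp add: u_def)
  have sC: "(\<Sum>i\<le>n. u i) \<in> carrier (A_ring m)" by (rule C_sum) (simp add: uC)
  have tC: "t \<in> carrier (A_ring m)" using a sC by (simp add: t_def)
  have tz: "fps_nth t j = 0" if "j \<le> n" for j
  proof -
    have jm: "enat j \<le> m" using that n enat_le_trans by auto
    have "fps_nth (\<Sum>i\<le>n. u i) j = (\<Sum>i\<le>n. fps_nth a i * (if j = i then 1 else 0))"
      by (simp add: fps_sum_nth u_def jm)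
    also have "\<dots> = (\<Sum>i\<le>n. if i = j then fps_nth a j else 0)"
      by (rule sum.cong) auto
    also have "\<dots> = fps_nth a j" using that by simp
    finally show ?thesis by (simp add: t_def)
  qed
  have "a = (\<Sum>i\<le>n. u i) + t" by (simp add: t_def)
  then have "cg (JS m) (Xv (n, a)) (Xv (n, \<Sum>i\<le>n. u i) + Xv (n, t))"
    using R1[OF n sC tC] by simp
  also have "cg (JS m) \<dots> ((\<Sum>i\<le>n. Xv (n, u i)) + 0)"
    by (rule cg_add[OF Dsum[OF n uC] Tail[OF n tC tz]])
  also have "cg (JS m) \<dots> ((\<Sum>i\<le>n. Xv (n - i, fps_const (fps_nth a i))) + 0)"
    by (rule cg_add[OF cg_sum], unfold u_def, rule Mono[OF n]) auto
  finally show ?thesis by simp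
qed

lemma NAT:
  assumes j: "enat j \<le> m"
  shows "cg (JS m) (Xv (j, of_nat k :: 'k::comm_ring_1 fps)) (of_nat k * (if j = 0 then 1 else 0))"
proof (induction k)
  case 0 then show ?case by (simp add: D0)
next
  case (Suc k)
  have one: "cg (JS m) (Xv (j, 1 :: 'k fps)) (if j = 0 then 1 else 0)"
    using RJ[OF j, of 0] by (simp add: trunc_id)
  have "cg (JS m) (Xv (j, 1 + of_nat k :: 'k fps)) (Xv (j, 1) + Xv (j, of_nat k))"
    by (rule R1[OF j]) auto
  also have "cg (JS m) \<dots> ((if j = 0 then 1 else 0) + of_nat k * (if j = 0 then 1 else 0))"
    by (rule cg_add[OF one Suc])
  finally show ?case by (simp add: algebra_simps)
qed



lemma T_carrier [simp]: "carrier (type_ring :: 'a::comm_ring_1 ring) = UNIV" by (simp add: type_ring_def)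
lemma T_add [simp]: "a \<oplus>\<^bsub>(type_ring :: 'a::comm_ring_1 ring)\<^esub> b = a + b" by (simp add: type_ring_def)
lemma T_mult [simp]: "a \<otimes>\<^bsub>(type_ring :: 'a::comm_ring_1 ring)\<^esub> b = a * b" by (simp add: type_ring_def)
lemma T_one [simp]: "\<one>\<^bsub>(type_ring :: 'a::comm_ring_1 ring)\<^esub> = 1" by (simp add: type_ring_def)
lemma O_carrier: "carrier (O_ring p m) = {f. \<forall>i. fps_nth f i \<in> {0..<int p} \<and> (\<not> enat i \<le> m \<longrightarrow> fps_nth f i = 0)}"
  by (simp add: O_ring_def)
lemma O_to_A_nth [simp]: "fps_nth (O_to_A f) i = of_int (fps_nth f i)"
  by (simp add: O_to_A_def)

lemma part1:
  assumes "hs_map m (type_ring :: 'k::comm_ring_1 ring) fps_const P \<in> HS_ideal m (A_ring m :: 'k fps ring)"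
  shows "P \<in> HS_ideal m (type_ring :: 'k ring)"
proof -
  define \<rho> :: "(nat \<times> 'k fps) zpoly \<Rightarrow> (nat \<times> 'k) zpoly" where "\<rho> = hs_map m (A_ring m) (\<lambda>g. fps_nth g 0)"
  have \<rho>Xv: "\<rho> (Xv (n, a)) = (if enat n \<le> m \<and> a \<in> carrier (A_ring m) then Xv (n, fps_nth a 0) else 0)" for n a
    by (simp add: \<rho>_def hs_map_def)
  have m0: "enat 0 \<le> m" by (simp add: zero_enat_def[symmetric])
  have rels: "\<rho> s \<in> HS_ideal m (type_ring :: 'k ring)" if "s \<in> HS_rels m (A_ring m)" for s
  proof -
    from that consider
      (a) n a b where "s = Xv (n, a + b) - Xv (n, a) - Xv (n, b)" "enat n \<le> m" "a \<in> carrier (A_ring m)" "b \<in> carrier (A_ring m)"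
    | (b) n a b where "s = Xv (n, trunc_fps m (a * b)) - (\<Sum>i\<le>n. Xv (i, a) * Xv (n - i, b))" "enat n \<le> m" "a \<in> carrier (A_ring m)" "b \<in> carrier (A_ring m)"
    | (c) "s = Xv (0, 1) - 1"
    | (d) n a where "s = Xv (n, a)" "\<not> (enat n \<le> m \<and> a \<in> carrier (A_ring m))"
      unfolding HS_rels_def by auto
    then show ?thesis
    proof cases
      case (a n a b)
      have "\<rho> s = Xv (n, fps_nth a 0 \<oplus>\<^bsub>(type_ring :: 'k ring)\<^esub> fps_nth b 0) - Xv (n, fps_nth a 0) - Xv (n, fps_nth b 0)"
        using a by (simp add: \<rho>_def hs_map_def peval_diff)
      also have "\<dots> \<in> HS_rels m (type_ring :: 'k ring)" unfolding HS_rels_def using a(2) by (intro UnI1) force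
      finally show ?thesis unfolding HS_ideal_def by (rule gen_ideal_gen)
    next
      case (b n a b)
      have "\<rho> s = Xv (n, fps_nth a 0 \<otimes>\<^bsub>(type_ring :: 'k ring)\<^esub> fps_nth b 0) - (\<Sum>i\<le>n. Xv (i, fps_nth a 0) * Xv (n - i, fps_nth b 0))"
      proof -
        have "\<rho> s = Xv (n, fps_nth a 0 * fps_nth b 0) - (\<Sum>i\<le>n. \<rho> (Xv (i, a)) * \<rho> (Xv (n - i, b)))"
          using b m0 by (simp add: \<rho>_def hs_map_def peval_diff peval_sum peval_mult)
        also have "(\<Sum>i\<le>n. \<rho> (Xv (i, a)) * \<rho> (Xv (n - i, b))) = (\<Sum>i\<le>n. Xv (i, fps_nth a 0) * Xv (n - i, fps_nth b 0))"
        proof (rule sum.cong)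
          fix i assume "i \<in> {..n}"
          then have "enat i \<le> m" "enat (n - i) \<le> m" using b(2) enat_le_trans[of _ n m] by auto
          then show "\<rho> (Xv (i, a)) * \<rho> (Xv (n - i, b)) = Xv (i, fps_nth a 0) * Xv (n - i, fps_nth b 0)"
            using b by (simp add: \<rho>Xv)
        qed simp
        finally show ?thesis by simp
      qed
      also have "\<dots> \<in> HS_rels m (type_ring :: 'k ring)" unfolding HS_rels_def using b(2) by (intro UnI1 UnI2) force
      finally show ?thesis unfolding HS_ideal_def by (rule gen_ideal_gen)
    next
      case c
      have "\<rho> s = Xv (0, \<one>\<^bsub>(type_ring :: 'k ring)\<^esub>) - 1"
        using c m0 by (simp add: \<rho>_def hs_map_def peval_diff)
      also have "\<dots> \<in> HS_rels m (type_ring :: 'k ring)" unfolding HS_rels_def by blast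
      finally show ?thesis unfolding HS_ideal_def by (rule gen_ideal_gen)
    next
      case (d n a)
      then have "\<rho> s = 0" by (auto simp add: \<rho>Xv)
      then show ?thesis unfolding HS_ideal_def by simp
    qed
  qed
  have 1: "\<rho> (hs_map m (type_ring :: 'k ring) fps_const P) \<in> HS_ideal m (type_ring :: 'k ring)"
    using assms unfolding HS_ideal_def
    by (rule gen_ideal_elim) (use rels in \<open>auto simp: \<rho>_def hs_map_def peval_add peval_mult HS_ideal_def\<close>)
  define \<sigma>' :: "nat \<times> 'k \<Rightarrow> (nat \<times> 'k) zpoly" where "\<sigma>' = (\<lambda>(n, c). if enat n \<le> m then Xv (n, c) else 0)"
  have 2: "\<rho> (hs_map m (type_ring :: 'k ring) fps_const P) = peval \<sigma>' P"
    unfolding \<rho>_def hs_map_def peval_compose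
    by (rule arg_cong[where f="\<lambda>f. peval f P"]) (auto simp: \<sigma>'_def fun_eq_iff split: prod.splits)
  have 3: "Xv v - \<sigma>' v \<in> gen_ideal (HS_rels m (type_ring :: 'k ring))" for v
  proof (cases v)
    case (Pair n c)
    show ?thesis
    proof (cases "enat n \<le> m")
      case False
      then have "Xv v \<in> HS_rels m (type_ring :: 'k ring)" unfolding HS_rels_def Pair by blast
      then show ?thesis using False Pair by (simp add: \<sigma>'_def gen_ideal_gen)
    qed (simp add: \<sigma>'_def Pair)
  qed
  have "P - peval \<sigma>' P \<in> HS_ideal m (type_ring :: 'k ring)"
    using peval_cong_ideal[of Xv \<sigma>', OF 3] by (simp add: HS_ideal_def)
  then have "(P - peval \<sigma>' P) + peval \<sigma>' P \<in> HS_ideal m (type_ring :: 'k ring)"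
    using 1 2 unfolding HS_ideal_def by (metis gen_ideal_add)
  then show ?thesis by simp
qed



lemma part2:
  "\<exists>P. Q - hs_map m (type_ring :: 'k::comm_ring_1 ring) fps_const P \<in> (J_ideal m :: (nat \<times> 'k fps) zpoly set)"
proof -
  define w :: "nat \<times> 'k fps \<Rightarrow> (nat \<times> 'k) zpoly" where
    "w = (\<lambda>(n, a). if enat n \<le> m \<and> a \<in> carrier (A_ring m) then (\<Sum>i\<le>n. Xv (n - i, fps_nth a i)) else 0)"
  have h: "cg (JS m) (Xv v) (hs_map m (type_ring :: 'k ring) fps_const (w v))" for v
  proof (cases v)
    case (Pair n a)
    show ?thesis
    proof (cases "enat n \<le> m \<and> a \<in> carrier (A_ring m)")
      case True
      have "hs_map m (type_ring :: 'k ring) fps_const (w v) = (\<Sum>i\<le>n. Xv (n - i, fps_const (fps_nth a i)))"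
        using True Pair enat_le_trans[of _ n m] by (simp add: w_def hs_map_def peval_sum)
      then show ?thesis using KEY[of n m a] True Pair by simp
    next
      case False
      then show ?thesis using R4[OF False] Pair False by (auto simp add: w_def hs_map_def)
    qed
  qed
  have "cg (JS m) (peval Xv Q) (peval (\<lambda>v. hs_map m (type_ring :: 'k ring) fps_const (w v)) Q)"
    unfolding cg_def by (rule peval_cong_ideal) (use h in \<open>simp add: cg_def\<close>)
  then have "Q - hs_map m (type_ring :: 'k ring) fps_const (peval w Q) \<in> J_ideal m"
    unfolding hs_map_def peval_compose by (simp add: cg_def J_ideal_eq hs_map_def)
  then show ?thesis by blast
qed

lemma p_in:
  assumes "of_nat p = (0::'k::comm_ring_1)"
  shows "cg (JS m :: (nat \<times> 'k fps) zpoly set) (of_nat p) 0"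
proof -
  have m0: "enat 0 \<le> m" by (simp add: zero_enat_def[symmetric])
  have z: "(of_nat p :: 'k fps) = 0" unfolding fps_of_nat[symmetric] assms by simp
  have "cg (JS m) (Xv (0, of_nat p :: 'k fps)) (of_nat p * (if (0::nat) = 0 then 1 else 0))"
    by (rule NAT[OF m0])
  then have "cg (JS m) (Xv (0, 0 :: 'k fps)) (of_nat p)" unfolding z by simp
  then show ?thesis by (rule cg_trans[OF cg_sym D0])
qed

lemma part3:
  assumes "of_nat p = (0::'k::comm_ring_1)"
  shows "hs_map m (O_ring p m) (O_to_A :: int fps \<Rightarrow> 'k fps) P - of_int (HS_O_eps p m P) \<in> (J_ideal m :: (nat \<times> 'k fps) zpoly set)"
proof -
  define \<sigma>e where "\<sigma>e = (\<lambda>(n, a). if enat n \<le> m \<and> a \<in> carrier (O_ring p m) then fps_nth a n else (0::int))"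
  have var: "cg (JS m) (Xv (n, O_to_A a :: 'k fps)) (of_int (fps_nth a n))"
    if n: "enat n \<le> m" and a: "a \<in> carrier (O_ring p m)" for n a
  proof -
    have aC: "(O_to_A a :: 'k fps) \<in> carrier (A_ring m)" using a by (auto simp: O_carrier A_carrier)
    have nn: "fps_nth a i \<ge> 0" for i using a by (auto simp: O_carrier)
    have "cg (JS m) (Xv (n, O_to_A a :: 'k fps)) (\<Sum>i\<le>n. Xv (n - i, fps_const (fps_nth (O_to_A a :: 'k fps) i)))"
      by (rule KEY[OF n aC])
    also have "cg (JS m) \<dots> (\<Sum>i\<le>n. of_nat (nat (fps_nth a i)) * (if n - i = 0 then 1 else 0))"
    proof (rule cg_sum)
      fix i assume "i \<in> {..n}"
      then have im: "enat (n - i) \<le> m" using n enat_le_trans[of "n - i" n m] by auto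
      have "fps_const (fps_nth (O_to_A a :: 'k fps) i) = of_nat (nat (fps_nth a i))"
        using nn[of i] by (simp only: O_to_A_nth of_nat_nat[symmetric] fps_of_nat)
      then show "cg (JS m) (Xv (n - i, fps_const (fps_nth (O_to_A a :: 'k fps) i))) (of_nat (nat (fps_nth a i)) * (if n - i = 0 then 1 else 0))"
        using NAT[OF im, of "nat (fps_nth a i)", where 'k='k] by simp
    qed
    also have "(\<Sum>i\<le>n. of_nat (nat (fps_nth a i)) * (if n - i = 0 then 1 else 0)) = (\<Sum>i\<le>n. if i = n then of_int (fps_nth a n) else (0 :: (nat \<times> 'k fps) zpoly))"
      by (rule sum.cong) (use nn in auto)
    also have "\<dots> = of_int (fps_nth a n)" by simp
    finally show ?thesis .
  qed
  have h: "cg (JS m) ((\<lambda>(n, a). if enat n \<le> m \<and> a \<in> carrier (O_ring p m) then Xv (n, O_to_A a :: 'k fps) else 0) v) (of_int (\<sigma>e v))" for v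
    using var by (cases v) (auto simp: \<sigma>e_def)
  have 1: "cg (JS m) (hs_map m (O_ring p m) (O_to_A :: int fps \<Rightarrow> 'k fps) P) (of_int (peval \<sigma>e P))"
    unfolding hs_map_def peval_of_int_comp[symmetric] cg_def
    by (rule peval_cong_ideal, rule h[unfolded cg_def])
  define x where "x = peval \<sigma>e P"
  have e: "HS_O_eps p m P = x mod int p" by (simp add: HS_O_eps_def \<sigma>e_def x_def)
  have "(of_int x :: (nat \<times> 'k fps) zpoly) - of_int (x mod int p) = of_int (x - x mod int p)"
    by (simp only: of_int_diff)
  also have "\<dots> = of_int (int p * (x div int p))" by (simp only: minus_mod_eq_mult_div)
  also have "\<dots> = (of_nat p :: (nat \<times> 'k fps) zpoly) * of_int (x div int p)"
    by (simp only: of_int_mult of_int_of_nat_eq)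
  finally have eq: "(of_int x :: (nat \<times> 'k fps) zpoly) - of_int (HS_O_eps p m P) = of_nat p * of_int (x div int p)"
    by (simp only: e)
  have "cg (JS m) ((of_nat p :: (nat \<times> 'k fps) zpoly) * of_int (x div int p)) (0 * of_int (x div int p))"
    by (rule cg_mult[OF p_in[OF assms] cg_refl])
  note that_fact = this
  have 2: "cg (JS m :: (nat \<times> 'k fps) zpoly set) (of_int (peval \<sigma>e P)) (of_int (HS_O_eps p m P))"
  proof -
    have "(of_nat p :: (nat \<times> 'k fps) zpoly) * of_int (x div int p) \<in> gen_ideal (JS m)" using that_fact by (simp add: cg_def)
    then show ?thesis unfolding cg_def x_def[symmetric] eq .
  qed
  show ?thesis using cg_trans[OF 1 2] by (simp add: cg_def J_ideal_eq)
qed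

lemma part4:
  fixes \<tau> :: "(nat \<times> 'k::comm_ring_1 fps) \<Rightarrow> 'r::comm_ring_1"
  assumes p: "prime p"
    and h1: "\<forall>Q \<in> HS_ideal m (A_ring m :: 'k fps ring). peval \<tau> Q = 0"
    and h2: "\<forall>P. peval \<tau> (hs_map m (O_ring p m) (O_to_A :: int fps \<Rightarrow> 'k fps) P) = of_int (HS_O_eps p m P)"
  shows "\<forall>Q \<in> (J_ideal m :: (nat \<times> 'k fps) zpoly set). peval \<tau> Q = 0"
proof
  fix Q assume Q: "Q \<in> (J_ideal m :: (nat \<times> 'k fps) zpoly set)"
  have p1: "int p > 1" using prime_gt_1_nat[OF p] by simp
  show "peval \<tau> Q = 0"
    using Q unfolding J_ideal_def
  proof (rule gen_ideal_peval_zero)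
    fix s :: "(nat \<times> 'k fps) zpoly" assume "s \<in> HS_rels m (A_ring m) \<union> J_gens m"
    then show "peval \<tau> s = 0"
    proof
      assume "s \<in> HS_rels m (A_ring m)"
      then show ?thesis using h1 by (simp add: HS_ideal_def gen_ideal_gen)
    next
      assume "s \<in> J_gens m"
      then obtain n i where s: "s = Xv (n, trunc_fps m (fps_X ^ i)) - (if n = i then 1 else 0)" "enat n \<le> m"
        unfolding J_gens_def by blast
      define a :: "int fps" where "a = trunc_fps m (fps_X ^ i)"
      have aO: "a \<in> carrier (O_ring p m)" using p1 by (auto simp: O_carrier a_def)
      have eq: "(O_to_A a :: 'k fps) = trunc_fps m (fps_X ^ i)"
        by (rule fps_ext) (simp add: a_def)
      have "peval \<tau> (hs_map m (O_ring p m) (O_to_A :: int fps \<Rightarrow> 'k fps) (Xv (n, a))) = peval \<tau> (Xv (n, trunc_fps m (fps_X ^ i)))"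
        using aO s(2) eq by (simp add: hs_map_def)
      moreover have "HS_O_eps p m (Xv (n, a)) = (if n = i then 1 else 0)"
        using aO s(2) p1 by (simp add: HS_O_eps_def a_def)
      ultimately have "peval \<tau> (Xv (n, trunc_fps m (fps_X ^ i))) = (if n = i then 1 else 0)"
        using h2 by (metis of_int_0 of_int_1)
      then show ?thesis using s by (simp add: peval_diff)
    qed
  qed
qed

theorem proposition6p2:
  fixes p :: nat and m :: enat
  assumes "prime p" and "of_nat p = (0::'k::comm_ring_1)"
  defines "\<iota> \<equiv> hs_map m (type_ring :: 'k ring) (\<lambda>c. fps_const c)"
      and "\<iota>O \<equiv> hs_map m (O_ring p m) (O_to_A :: int fps \<Rightarrow> 'k fps)"
  shows
    \<comment> \<open>iota is injective\<close>
    "(\<forall>P. \<iota> P \<in> HS_ideal m (A_ring m :: 'k fps ring) \<longrightarrow> P \<in> HS_ideal m (type_ring :: 'k ring))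
     \<comment> \<open>rho is surjective\<close>
     \<and> (\<forall>Q. \<exists>P. Q - \<iota> P \<in> (J_ideal m :: (nat \<times> 'k fps) zpoly set))
     \<comment> \<open>HS^m(A)/J with the quotient map is the tensor product HS^m(A) \<otimes>_{HS^m(O_m)} F_p:
         the square commutes ...\<close>
     \<and> (\<forall>P. \<iota>O P - of_int (HS_O_eps p m P) \<in> (J_ideal m :: (nat \<times> 'k fps) zpoly set))
     \<comment> \<open>... and it is a pushout: every ring map f from HS^m(A) to a commutative ring S with
         f o (HS^m(O_m) -> HS^m(A)) = g o eps (g : F_p -> S) factors (uniquely) through HS^m(A)/J\<close>
     \<and> (\<forall>\<tau> :: (nat \<times> 'k fps) \<Rightarrow> 'r::comm_ring_1.
          (\<forall>Q \<in> HS_ideal m (A_ring m :: 'k fps ring). peval \<tau> Q = 0) \<longrightarrow>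
          (\<forall>P. peval \<tau> (\<iota>O P) = of_int (HS_O_eps p m P)) \<longrightarrow>
          (\<forall>Q \<in> (J_ideal m :: (nat \<times> 'k fps) zpoly set). peval \<tau> Q = 0))"
  proof -
  have A: "\<forall>P. \<iota> P \<in> HS_ideal m (A_ring m :: 'k fps ring) \<longrightarrow> P \<in> HS_ideal m (type_ring :: 'k ring)"
    unfolding \<iota>_def by (intro allI impI part1)
  have B: "\<forall>Q. \<exists>P. Q - \<iota> P \<in> (J_ideal m :: (nat \<times> 'k fps) zpoly set)"
    unfolding \<iota>_def by (intro allI part2)
  have C: "\<forall>P. \<iota>O P - of_int (HS_O_eps p m P) \<in> (J_ideal m :: (nat \<times> 'k fps) zpoly set)"
    unfolding \<iota>O_def by (intro allI part3[OF assms(2)])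
  have D: "\<forall>\<tau> :: (nat \<times> 'k fps) \<Rightarrow> 'r::comm_ring_1.
          (\<forall>Q \<in> HS_ideal m (A_ring m :: 'k fps ring). peval \<tau> Q = 0) \<longrightarrow>
          (\<forall>P. peval \<tau> (\<iota>O P) = of_int (HS_O_eps p m P)) \<longrightarrow>
          (\<forall>Q \<in> (J_ideal m :: (nat \<times> 'k fps) zpoly set). peval \<tau> Q = 0)"
    unfolding \<iota>O_def by (intro allI impI) (rule part4[OF assms(1)])
  show ?thesis by (intro conjI A B C D)
qed

end
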